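(* Let $m\ge1$ and let $(t_{i,j})$ be positive reals with $t_{i+m,j-m}=t_{i,j}$, $t_{i+2,j+2}=t_{i,j}$. Define, for $i\in\mathbb{Z}$ ($m$-periodic sequences) $$a_i=t_{i+1,-i},\quad b_i=t_{i+2,-i+1},\quad c_i=t_{i,-i},\quad d_i=t_{i+1,-i+1},$$ $$x_i=\frac{c_id_{i+1}+c_{i+1}d_i}{a_ib_i},\qquad y_i=\frac{a_{i-1}b_i+a_ib_{i-1}}{c_id_i},$$ for $n\ge1$ $$u_{n,i}=\prod_{\ell=0}^{n-1}x_{i-\ell-1}^{\frac{n+1}{2}-\left|\frac{n-1}{2}-\ell\right|},\qquad v_{n,i}=\prod_{\ell=0}^{n-1}y_{i-\ell-1}^{\frac{n+1}{2}-\left|\frac{n-1}{2}-\ell\right|},$$ with $u_{0,i}=u_{-1,i}=u_{-2,i}=v_{0,i}=v_{-1,i}=v_{-2,i}=1$, and $\theta_{i,j,k}=t_{i+\lfloor k/2\rfloor,\,j+\lfloor k/2\rfloor}$. Then the solution of the $T$-system with initial data $T_{i,j,(i+j+1\bmod2)}=t_{i,j}$ is $$T_{i,j,k}=u_{k-1,\frac{i-j+k-1}{2}}\;v_{k-2,\frac{i-j+k-1}{2}}\;\theta_{i,j,k}\qquad(i,j\in\mathbb{Z},\ k\ge0,\ i+j+k\equiv1\pmod2).$$ Moreover, for $k\ge1$ and $i+j+k\equiv0\pmod2$, the ratio $L_{i,j,k}=\frac{T_{i+1,j,k}T_{i-1,j,k}}{T_{i,j,k+1}T_{i,j,k-1}}$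 is given by: if $k$ is even, with $\alpha=\frac{i-j}{2}$: $L_{i,j,k}=\frac{a_\alpha b_{\alpha-1}}{a_\alpha b_{\alpha-1}+a_{\alpha-1}b_\alpha}$ when $i+j+k\equiv0\pmod4$ and $L_{i,j,k}=\frac{a_{\alpha-1}b_{\alpha}}{a_\alpha b_{\alpha-1}+a_{\alpha-1}b_\alpha}$ when $i+j+k\equiv2\pmod4$; if $k$ is odd, with $\beta=\frac{i-j-1}{2}$: $L_{i,j,k}=\frac{c_{\beta+1}d_\beta}{c_\beta d_{\beta+1}+c_{\beta+1}d_\beta}$ when $i+j+k\equiv0\pmod4$ and $L_{i,j,k}=\frac{c_\beta d_{\beta+1}}{c_\beta d_{\beta+1}+c_{\beta+1}d_\beta}$ when $i+j+k\equiv2\pmod4$; and $R_{i,j,k}=\frac{T_{i,j+1,k}T_{i,j-1,k}}{T_{i,j,k+1}T_{i,j,k-1}}=1-L_{i,j,k}$.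
   Context: The $T$-system is $T_{i,j,k+1}T_{i,j,k-1}=T_{i+1,j,k}T_{i-1,j,k}+T_{i,j+1,k}T_{i,j-1,k}$ for $k\ge1$, $i+j+k\equiv0\pmod2$, on points $(i,j,k)\in\mathbb{Z}^2\times\mathbb{Z}_{\ge0}$ with $i+j+k\equiv1\pmod2$, with initial data $T_{i,j,(i+j+1\bmod 2)}=t_{i,j}$. The exponents in $u_{n,i},v_{n,i}$ are nonnegative integers. *)

theory Defs
  imports Complex_Main
begin

text \<open>Only the values at points with i+j+k odd are meaningful; at those points k=0 resp. k=1
carry the initial data.\<close>
fun Tsys :: "(int \<Rightarrow> int \<Rightarrow> real) \<Rightarrow> int \<Rightarrow> int \<Rightarrow> nat \<Rightarrow> real" where
  "Tsys t i j 0 = t i j"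
| "Tsys t i j (Suc 0) = t i j"
| "Tsys t i j (Suc (Suc k)) =
     (Tsys t (i+1) j (Suc k) * Tsys t (i-1) j (Suc k)
      + Tsys t i (j+1) (Suc k) * Tsys t i (j-1) (Suc k)) / Tsys t i j k"

definition sa :: "(int \<Rightarrow> int \<Rightarrow> real) \<Rightarrow> int \<Rightarrow> real" where
  "sa t i = t (i+1) (-i)"
definition sb :: "(int \<Rightarrow> int \<Rightarrow> real) \<Rightarrow> int \<Rightarrow> real" where
  "sb t i = t (i+2) (-i+1)"
definition sc :: "(int \<Rightarrow> int \<Rightarrow> real) \<Rightarrow> int \<Rightarrow> real" where
  "sc t i = t i (-i)"
definition sd :: "(int \<Rightarrow> int \<Rightarrow> real) \<Rightarrow> int \<Rightarrow> real" where
  "sd t i = t (i+1) (-i+1)"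

definition sx :: "(int \<Rightarrow> int \<Rightarrow> real) \<Rightarrow> int \<Rightarrow> real" where
  "sx t i = (sc t i * sd t (i+1) + sc t (i+1) * sd t i) / (sa t i * sb t i)"
definition sy :: "(int \<Rightarrow> int \<Rightarrow> real) \<Rightarrow> int \<Rightarrow> real" where
  "sy t i = (sa t (i-1) * sb t i + sa t i * sb t (i-1)) / (sc t i * sd t i)"

definition expo :: "int \<Rightarrow> nat \<Rightarrow> real" where
  "expo n l = (real_of_int n + 1) / 2 - \<bar>(real_of_int n - 1) / 2 - real l\<bar>"

definition su :: "(int \<Rightarrow> int \<Rightarrow> real) \<Rightarrow> int \<Rightarrow> int \<Rightarrow> real" where
  "su t n i = (if n \<le> 0 then 1 else
      (\<Prod>l\<in>{0..<nat n}. sx t (i - int l - 1) powr expo n l))"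
definition sv :: "(int \<Rightarrow> int \<Rightarrow> real) \<Rightarrow> int \<Rightarrow> int \<Rightarrow> real" where
  "sv t n i = (if n \<le> 0 then 1 else
      (\<Prod>l\<in>{0..<nat n}. sy t (i - int l - 1) powr expo n l))"

definition theta :: "(int \<Rightarrow> int \<Rightarrow> real) \<Rightarrow> int \<Rightarrow> int \<Rightarrow> nat \<Rightarrow> real" where
  "theta t i j k = t (i + int (k div 2)) (j + int (k div 2))"

end

theory Submission
  imports Defs
begin


definition E :: "int \<Rightarrow> int \<Rightarrow> int" where "E n l = max 0 (min (l+1) (n-l))"

lemma E_rec: assumes n0: "n \<ge> 0" shows "E n l + E (n-2) (l-1) = E (n-1) l + E (n-1) (l-1) + (if odd n \<and> l = (n-1) div 2 then 1 else 0)"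
proof -
  obtain b where "n = 2*b \<or> n = 2*b+1" by (metis oddE evenE)
  then show ?thesis
  proof
    assume n: "n = 2*b"
    show ?thesis using n0 unfolding E_def max_def min_def n by (simp split: if_split; presburger)
  next
    assume n: "n = 2*b+1"
    show ?thesis using n0 unfolding E_def max_def min_def n by (simp split: if_split; presburger)
  qed
qed

lemma expo_E: "int l < n \<Longrightarrow> expo n l = real_of_int (E n (int l))"
  unfolding expo_def E_def by (auto simp: abs_if max_def min_def field_simps)

definition W :: "(int \<Rightarrow> real) \<Rightarrow> int \<Rightarrow> int \<Rightarrow> real" where
  "W f n i = (if n \<le> 0 then 1 else (\<Prod>l\<in>{0..<nat n}. f (i - int l - 1) powr expo n l))"

lemma W_window:
  assumes fpos: "\<And>r. f r > 0" and fin: "finite S" and sub: "{i-n..i-1} \<subseteq> S"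
  shows "W f n i = (\<Prod>r\<in>S. f r powr of_int (E n (i-1-r)))"
proof (cases "n \<le> 0")
  case True
  have "E n (i-1-r) = 0" for r using True by (simp add: E_def)
  moreover have "f r \<noteq> 0" for r using fpos[of r] by simp
  ultimately show ?thesis using True by (simp add: W_def)
next
  case False
  have "W f n i = (\<Prod>l\<in>{0..<nat n}. f (i - int l - 1) powr expo n l)" using False by (simp add: W_def)
  also have "\<dots> = (\<Prod>r\<in>{i-n..i-1}. f r powr of_int (E n (i-1-r)))"
    by (rule prod.reindex_bij_witness[where i="\<lambda>r. nat (i-1-r)" and j="\<lambda>l. i - int l - 1"])
       (auto simp: expo_E)
  also have "\<dots> = (\<Prod>r\<in>S. f r powr of_int (E n (i-1-r)))"
  proof (rule prod.mono_neutral_left[OF fin sub], rule ballI)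
    fix r assume "r \<in> S - {i-n..i-1}"
    then have "E n (i-1-r) = 0" by (auto simp: E_def)
    moreover have "f r \<noteq> 0" using fpos[of r] by simp
    ultimately show "f r powr of_int (E n (i-1-r)) = 1" by simp
  qed
  finally show ?thesis .
qed

lemma W_rec:
  assumes fpos: "\<And>r. f r > 0" and n: "n \<ge> 0"
  shows "W f n s * W f (n-2) (s-1) = W f (n-1) s * W f (n-1) (s-1) * (if odd n then f (s - (n+1) div 2) else 1)"
proof -
  define S where "S = {s-n-2..s}"
  have fin: "finite S" by (simp add: S_def)
  have fnz: "f r \<noteq> 0" for r using fpos[of r] by simp
  have w: "W f n' i = (\<Prod>r\<in>S. f r powr of_int (E n' (i-1-r)))" if "{i-n'..i-1} \<subseteq> S" for n' i
    by (rule W_window[OF fpos fin that])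
  have e: "(if odd n then f (s - (n+1) div 2) else 1) = (\<Prod>r\<in>S. f r powr of_int (if odd n \<and> s-1-r = (n-1) div 2 then 1 else 0))"
  proof (cases "odd n")
    case True
    have "(\<Prod>r\<in>S. f r powr of_int (if odd n \<and> s-1-r = (n-1) div 2 then 1 else 0)) = (\<Prod>r\<in>S. if r = s - (n+1) div 2 then f r else 1)"
    proof (rule prod.cong[OF refl])
      fix x
      have key: "(s-1-x = (n-1) div 2) = (x = s - (n+1) div 2)" using True by presburger
      show "f x powr of_int (if odd n \<and> s-1-x = (n-1) div 2 then 1 else 0) = (if x = s - (n+1) div 2 then f x else 1)"
        using True fnz[of x] by (simp only: key) (simp add: fpos abs_of_pos)
    qed
    also have "\<dots> = f (s - (n+1) div 2)" proof -
      have "s - (n+1) div 2 \<in> S" using True n unfolding S_def by simp presburger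
      then show ?thesis by (subst prod.delta[OF fin]) simp
    qed
    finally show ?thesis using True by simp
  qed (simp add: fnz)
  have "W f n s * W f (n-2) (s-1) = (\<Prod>r\<in>S. f r powr of_int (E n (s-1-r)) * f r powr of_int (E (n-2) (s-1-1-r)))"
    by (subst w, force simp: S_def)+ (simp add: prod.distrib)
  also have "\<dots> = (\<Prod>r\<in>S. f r powr of_int (E (n-1) (s-1-r)) * f r powr of_int (E (n-1) (s-1-1-r)) * f r powr of_int (if odd n \<and> s-1-r = (n-1) div 2 then 1 else 0))"
  proof (rule prod.cong[OF refl])
    fix r
    have "E n (s-1-r) + E (n-2) (s-1-1-r) = E (n-1) (s-1-r) + E (n-1) (s-1-1-r) + (if odd n \<and> s-1-r = (n-1) div 2 then 1 else 0)"
      using E_rec[OF n, of "s-1-r"] by (simp add: algebra_simps)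
    then show "f r powr of_int (E n (s-1-r)) * f r powr of_int (E (n-2) (s-1-1-r)) = f r powr of_int (E (n-1) (s-1-r)) * f r powr of_int (E (n-1) (s-1-1-r)) * f r powr of_int (if odd n \<and> s-1-r = (n-1) div 2 then 1 else 0)"
      by (metis (no_types, lifting) of_int_add powr_add)
  qed
  also have "\<dots> = W f (n-1) s * W f (n-1) (s-1) * (if odd n then f (s - (n+1) div 2) else 1)"
    unfolding e by (subst w, force simp: S_def)+ (simp add: prod.distrib)
  finally show ?thesis .
qed



lemma tshift_nat:
  fixes t :: "int \<Rightarrow> int \<Rightarrow> 'a"
  assumes per2: "\<And>i j. t (i + 2) (j + 2) = t i j"
  shows "t (i + 2 * int n) (j + 2 * int n) = t i j"
proof (induction n)
  case (Suc n)
  have "t (i + 2 * int (Suc n)) (j + 2 * int (Suc n)) = t (i + 2 * int n + 2) (j + 2 * int n + 2)"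
    by (simp add: algebra_simps)
  also have "\<dots> = t (i + 2 * int n) (j + 2 * int n)" by (rule per2)
  finally show ?case using Suc by simp
qed simp

lemma tper:
  fixes t :: "int \<Rightarrow> int \<Rightarrow> 'a" and x x' y y' :: int
  assumes per2: "\<And>i j. t (i + 2) (j + 2) = t i j"
    and "x - x' = y - y'" and "even (x - x')"
  shows "t x y = t x' y'"
proof -
  obtain r where r: "x - x' = 2 * r" using assms(3) by (metis evenE)
  show ?thesis
  proof (cases "r \<ge> 0")
    case True
    then obtain n where n: "r = int n" using zero_le_imp_eq_int[OF True] by blast
    have hx: "x = x' + 2 * int n" and hy: "y = y' + 2 * int n" using n r assms(2) by linarith+
    show ?thesis unfolding hx hy by (rule tshift_nat[where t=t, OF per2])
  next
    case False
    then obtain n where n: "- r = int n" using zero_le_imp_eq_int[of "-r"] False by auto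
    have hx: "x' = x + 2 * int n" and hy: "y' = y + 2 * int n" using n r assms(2) by linarith+
    show ?thesis unfolding hx hy by (rule tshift_nat[where t=t, OF per2, symmetric])
  qed
qed

context
  fixes t :: "int \<Rightarrow> int \<Rightarrow> real" and K :: nat and i j :: int
  assumes per2: "\<And>i j. t (i + 2) (j + 2) = t i j"
    and K1: "K \<ge> 1"
begin

lemma th_e0:
  assumes "even K" "(i+j+int K) mod 4 = 0"
  shows "theta t (i+1) j K * theta t (i-1) j K = sa t ((i-j) div 2) * sb t ((i-j) div 2 - 1)"
    "theta t i (j+1) K * theta t i (j-1) K = sa t ((i-j) div 2 - 1) * sb t ((i-j) div 2)"
    "theta t i j (K+1) * theta t i j (K-1) = sc t ((i-j) div 2) * sd t ((i-j) div 2)"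
proof -
  have th: "theta t (i+1) j K = sa t ((i-j) div 2)" "theta t (i-1) j K = sb t ((i-j) div 2 - 1)"
    "theta t i (j+1) K = sa t ((i-j) div 2 - 1)" "theta t i (j-1) K = sb t ((i-j) div 2)"
    "theta t i j (K+1) = sc t ((i-j) div 2)" "theta t i j (K-1) = sd t ((i-j) div 2)"
    unfolding theta_def sa_def sb_def sc_def sd_def
    by (rule tper[where t=t, OF per2]; use assms K1 in presburger)+
  show "theta t (i+1) j K * theta t (i-1) j K = sa t ((i-j) div 2) * sb t ((i-j) div 2 - 1)"
    "theta t i (j+1) K * theta t i (j-1) K = sa t ((i-j) div 2 - 1) * sb t ((i-j) div 2)"
    "theta t i j (K+1) * theta t i j (K-1) = sc t ((i-j) div 2) * sd t ((i-j) div 2)" by (simp_all only: th mult.commute)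
qed

lemma th_e2:
  assumes "even K" "(i+j+int K) mod 4 = 2"
  shows "theta t (i+1) j K * theta t (i-1) j K = sa t ((i-j) div 2 - 1) * sb t ((i-j) div 2)"
    "theta t i (j+1) K * theta t i (j-1) K = sa t ((i-j) div 2) * sb t ((i-j) div 2 - 1)"
    "theta t i j (K+1) * theta t i j (K-1) = sc t ((i-j) div 2) * sd t ((i-j) div 2)"
proof -
  have th: "theta t (i+1) j K = sb t ((i-j) div 2)" "theta t (i-1) j K = sa t ((i-j) div 2 - 1)"
    "theta t i (j+1) K = sb t ((i-j) div 2 - 1)" "theta t i (j-1) K = sa t ((i-j) div 2)"
    "theta t i j (K+1) = sd t ((i-j) div 2)" "theta t i j (K-1) = sc t ((i-j) div 2)"
    unfolding theta_def sa_def sb_def sc_def sd_def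
    by (rule tper[where t=t, OF per2]; use assms K1 in presburger)+
  show "theta t (i+1) j K * theta t (i-1) j K = sa t ((i-j) div 2 - 1) * sb t ((i-j) div 2)"
    "theta t i (j+1) K * theta t i (j-1) K = sa t ((i-j) div 2) * sb t ((i-j) div 2 - 1)"
    "theta t i j (K+1) * theta t i j (K-1) = sc t ((i-j) div 2) * sd t ((i-j) div 2)" by (simp_all only: th mult.commute)
qed

lemma th_o2:
  assumes "odd K" "(i+j+int K) mod 4 = 2"
  shows "theta t (i+1) j K * theta t (i-1) j K = sc t ((i-j-1) div 2) * sd t ((i-j-1) div 2 + 1)"
    "theta t i (j+1) K * theta t i (j-1) K = sc t ((i-j-1) div 2 + 1) * sd t ((i-j-1) div 2)"
    "theta t i j (K+1) * theta t i j (K-1) = sa t ((i-j-1) div 2) * sb t ((i-j-1) div 2)"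
proof -
  have th: "theta t (i+1) j K = sd t ((i-j-1) div 2 + 1)" "theta t (i-1) j K = sc t ((i-j-1) div 2)"
    "theta t i (j+1) K = sd t ((i-j-1) div 2)" "theta t i (j-1) K = sc t ((i-j-1) div 2 + 1)"
    "theta t i j (K+1) = sb t ((i-j-1) div 2)" "theta t i j (K-1) = sa t ((i-j-1) div 2)"
    unfolding theta_def sa_def sb_def sc_def sd_def
    by (rule tper[where t=t, OF per2]; use assms K1 in presburger)+
  show "theta t (i+1) j K * theta t (i-1) j K = sc t ((i-j-1) div 2) * sd t ((i-j-1) div 2 + 1)"
    "theta t i (j+1) K * theta t i (j-1) K = sc t ((i-j-1) div 2 + 1) * sd t ((i-j-1) div 2)"
    "theta t i j (K+1) * theta t i j (K-1) = sa t ((i-j-1) div 2) * sb t ((i-j-1) div 2)" by (simp_all only: th mult.commute)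
qed

lemma th_o0:
  assumes "odd K" "(i+j+int K) mod 4 = 0"
  shows "theta t (i+1) j K * theta t (i-1) j K = sc t ((i-j-1) div 2 + 1) * sd t ((i-j-1) div 2)"
    "theta t i (j+1) K * theta t i (j-1) K = sc t ((i-j-1) div 2) * sd t ((i-j-1) div 2 + 1)"
    "theta t i j (K+1) * theta t i j (K-1) = sa t ((i-j-1) div 2) * sb t ((i-j-1) div 2)"
proof -
  have th: "theta t (i+1) j K = sc t ((i-j-1) div 2 + 1)" "theta t (i-1) j K = sd t ((i-j-1) div 2)"
    "theta t i (j+1) K = sc t ((i-j-1) div 2)" "theta t i (j-1) K = sd t ((i-j-1) div 2 + 1)"
    "theta t i j (K+1) = sa t ((i-j-1) div 2)" "theta t i j (K-1) = sb t ((i-j-1) div 2)"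
    unfolding theta_def sa_def sb_def sc_def sd_def
    by (rule tper[where t=t, OF per2]; use assms K1 in presburger)+
  show "theta t (i+1) j K * theta t (i-1) j K = sc t ((i-j-1) div 2 + 1) * sd t ((i-j-1) div 2)"
    "theta t i (j+1) K * theta t i (j-1) K = sc t ((i-j-1) div 2) * sd t ((i-j-1) div 2 + 1)"
    "theta t i j (K+1) * theta t i j (K-1) = sa t ((i-j-1) div 2) * sb t ((i-j-1) div 2)" by (simp_all only: th mult.commute)
qed

end


lemma Tsys_pos:
  assumes pos: "\<And>i j. t i j > 0"
  shows "Tsys t i j k > 0"
proof -
  have "(\<forall>i j. t i j > 0) \<longrightarrow> Tsys t i j k > 0"
    by (induction t i j k rule: Tsys.induct) (auto intro!: divide_pos_pos add_pos_pos mult_pos_pos)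
  then show ?thesis using pos by blast
qed

lemma W_pos: assumes "\<And>r. f r > 0" shows "W f n s > 0"
proof -
  have nz: "f r \<noteq> 0" for r using assms[of r] by simp
  show ?thesis unfolding W_def using assms by (auto intro!: prod_pos simp: nz)
qed

lemma su_W: "su t = W (sx t)" and sv_W: "sv t = W (sy t)"
  by (auto simp: fun_eq_iff su_def sv_def W_def)

context
  fixes t :: "int \<Rightarrow> int \<Rightarrow> real"
  assumes pos: "\<And>i j. t i j > 0"
    and per2: "\<And>i j. t (i + 2) (j + 2) = t i j"
begin

lemma sx_pos: "sx t r > 0" unfolding sx_def sa_def sb_def sc_def sd_def
  by (intro divide_pos_pos add_pos_pos mult_pos_pos pos)
lemma sy_pos: "sy t r > 0" unfolding sy_def sa_def sb_def sc_def sd_def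
  by (intro divide_pos_pos add_pos_pos mult_pos_pos pos)

lemma s_nz[simp]: "sa t r \<noteq> 0" "sb t r \<noteq> 0" "sc t r \<noteq> 0" "sd t r \<noteq> 0"
  unfolding sa_def sb_def sc_def sd_def using pos by (metis less_irrefl)+

definition Uv :: "int \<Rightarrow> int \<Rightarrow> real" where "Uv n s = su t n s * sv t (n-1) s"

lemma U_pos: "Uv n s > 0"
  unfolding Uv_def su_W sv_W using W_pos sx_pos sy_pos by (simp add: mult_pos_pos)

lemma U_rec:
  assumes n: "n \<ge> 1"
  shows "Uv n s * Uv (n-2) (s-1) = Uv (n-1) s * Uv (n-1) (s-1)
     * (if odd n then sx t (s - (n+1) div 2) else 1) * (if odd (n-1) then sy t (s - n div 2) else 1)"
proof -
  have a: "su t n s * su t (n-2) (s-1) = su t (n-1) s * su t (n-1) (s-1) * (if odd n then sx t (s - (n+1) div 2) else 1)"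
    unfolding su_W by (rule W_rec) (use sx_pos n in auto)
  have b: "sv t (n-1) s * sv t (n-1-2) (s-1) = sv t (n-1-1) s * sv t (n-1-1) (s-1) * (if odd (n-1) then sy t (s - (n-1+1) div 2) else 1)"
    unfolding sv_W by (rule W_rec) (use sy_pos n in auto)
  have c: "n - 2 - 1 = n - 1 - 2" "n - 1 - 1 = n - 2" "n - 1 + 1 = n" by simp_all
  show ?thesis unfolding Uv_def using a b unfolding c by (simp add: algebra_simps)
qed

definition Fv :: "int \<Rightarrow> int \<Rightarrow> nat \<Rightarrow> real" where
  "Fv i j k = Uv (int k - 1) ((i - j + int k - 1) div 2) * theta t i j k"

lemma theta_pos: "theta t i j k > 0" unfolding theta_def by (rule pos)

lemma theta_sum:
  assumes K1: "K \<ge> 1" and ev: "even (i + j + int K)"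
  shows "theta t (i+1) j K * theta t (i-1) j K + theta t i (j+1) K * theta t i (j-1) K
     = (if odd (int K) then sx t ((i - j + int K) div 2 - (int K+1) div 2) else 1)
     * (if odd (int K - 1) then sy t ((i - j + int K) div 2 - int K div 2) else 1)
     * (theta t i j (K+1) * theta t i j (K-1))"
proof -
  have m: "(i+j+int K) mod 4 = 0 \<or> (i+j+int K) mod 4 = 2" using ev by presburger
  show ?thesis
  proof (cases "even K")
    case True
    have s: "(i - j + int K) div 2 - int K div 2 = (i-j) div 2" using True ev by presburger
    have p: "odd (int K - 1)" "\<not> odd (int K)" using True by auto
    define a where "a = (i-j) div 2"
    have X: "(if odd (int K) then sx t ((i - j + int K) div 2 - (int K+1) div 2) else 1) = 1" using p by simp
    have Y: "(if odd (int K - 1) then sy t ((i - j + int K) div 2 - int K div 2) else 1) = sy t a" using p s a_def by simp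
    have sye: "sy t a * (sc t a * sd t a) = sa t (a-1) * sb t a + sa t a * sb t (a-1)"
      unfolding sy_def by simp
    from m show ?thesis
    proof
      assume h: "(i+j+int K) mod 4 = 0"
      show ?thesis unfolding X Y th_e0[where t=t, OF per2 K1 True h] mult_1_left a_def[symmetric] sye
        by (simp add: add.commute)
    next
      assume h: "(i+j+int K) mod 4 = 2"
      show ?thesis unfolding X Y th_e2[where t=t, OF per2 K1 True h] mult_1_left a_def[symmetric] sye
        by (simp add: add.commute)
    qed
  next
    case False
    have s: "(i - j + int K) div 2 - (int K + 1) div 2 = (i-j-1) div 2" using False ev by presburger
    have p: "odd (int K)" "\<not> odd (int K - 1)" using False by auto
    define b where "b = (i-j-1) div 2"
    have X: "(if odd (int K) then sx t ((i - j + int K) div 2 - (int K+1) div 2) else 1) = sx t b" using p s b_def by simp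
    have Y: "(if odd (int K - 1) then sy t ((i - j + int K) div 2 - int K div 2) else 1) = 1" using p by simp
    have sxe: "sx t b * (sa t b * sb t b) = sc t b * sd t (b+1) + sc t (b+1) * sd t b"
      unfolding sx_def by simp
    from m show ?thesis
    proof
      assume h: "(i+j+int K) mod 4 = 0"
      show ?thesis unfolding X Y th_o0[where t=t, OF per2 K1 False h] mult_1_right b_def[symmetric] sxe
        by (simp add: add.commute)
    next
      assume h: "(i+j+int K) mod 4 = 2"
      show ?thesis unfolding X Y th_o2[where t=t, OF per2 K1 False h] mult_1_right b_def[symmetric] sxe
        by (simp add: add.commute)
    qed
  qed
qed

lemma Tsys_rec:
  assumes "K \<ge> 1"
  shows "Tsys t i j (K+1) * Tsys t i j (K-1) = Tsys t (i+1) j K * Tsys t (i-1) j K + Tsys t i (j+1) K * Tsys t i (j-1) K"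
proof -
  obtain k where k: "K = Suc k" using assms by (cases K) auto
  have "Tsys t i j k > 0" by (rule Tsys_pos[OF pos])
  then show ?thesis unfolding k by simp
qed

lemma nb:
  assumes K1: "K \<ge> 1" and ev: "even (i + j + int K)"
    and IH: "\<And>i j. odd (i + j + int K) \<Longrightarrow> Tsys t i j K = Fv i j K"
  defines "\<sigma> \<equiv> (i - j + int K) div 2"
  shows "Tsys t (i+1) j K * Tsys t (i-1) j K = Uv (int K - 1) \<sigma> * Uv (int K - 1) (\<sigma>-1) * (theta t (i+1) j K * theta t (i-1) j K)"
    "Tsys t i (j+1) K * Tsys t i (j-1) K = Uv (int K - 1) \<sigma> * Uv (int K - 1) (\<sigma>-1) * (theta t i (j+1) K * theta t i (j-1) K)"
proof -
  have e: "(i + 1 - j + int K - 1) div 2 = \<sigma>" "(i - 1 - j + int K - 1) div 2 = \<sigma> - 1"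
    "(i - (j + 1) + int K - 1) div 2 = \<sigma> - 1" "(i - (j - 1) + int K - 1) div 2 = \<sigma>"
    unfolding \<sigma>_def using ev by presburger+
  have o: "odd (i + 1 + j + int K)" "odd (i - 1 + j + int K)" "odd (i + (j+1) + int K)" "odd (i + (j - 1) + int K)"
    using ev by presburger+
  show "Tsys t (i+1) j K * Tsys t (i-1) j K = Uv (int K - 1) \<sigma> * Uv (int K - 1) (\<sigma>-1) * (theta t (i+1) j K * theta t (i-1) j K)"
    unfolding IH[OF o(1)] IH[OF o(2)] Fv_def e by (simp add: algebra_simps)
  show "Tsys t i (j+1) K * Tsys t i (j-1) K = Uv (int K - 1) \<sigma> * Uv (int K - 1) (\<sigma>-1) * (theta t i (j+1) K * theta t i (j-1) K)"
    unfolding IH[OF o(3)] IH[OF o(4)] Fv_def e by (simp add: algebra_simps)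
qed

lemma formula: "odd (i + j + int k) \<Longrightarrow> Tsys t i j k = Fv i j k"
proof (induction k arbitrary: i j rule: less_induct)
  case (less k)
  show ?case
  proof (cases k)
    case 0
    then show ?thesis by (simp add: Fv_def Uv_def su_def sv_def theta_def)
  next
    case (Suc k1)
    show ?thesis
    proof (cases k1)
      case 0
      then show ?thesis using Suc by (simp add: Fv_def Uv_def su_def sv_def theta_def)
    next
      case (Suc k2)
      define K where "K = Suc k2"
      have kK: "k = K + 1" "K \<ge> 1" using Suc \<open>k = Suc k1\<close> K_def by auto
      have ev: "even (i + j + int K)" using less.prems kK by simp
      define \<sigma> where "\<sigma> = (i - j + int K) div 2"
      have IHK: "\<And>i j. odd (i + j + int K) \<Longrightarrow> Tsys t i j K = Fv i j K" using less.IH kK by simp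
      have IHK1: "Tsys t i j (K-1) = Fv i j (K-1)" using less.IH[of "K-1" i j] kK ev by simp
      have n1: "Tsys t (i+1) j K * Tsys t (i-1) j K = Uv (int K - 1) \<sigma> * Uv (int K - 1) (\<sigma>-1) * (theta t (i+1) j K * theta t (i-1) j K)"
        and n2: "Tsys t i (j+1) K * Tsys t i (j-1) K = Uv (int K - 1) \<sigma> * Uv (int K - 1) (\<sigma>-1) * (theta t i (j+1) K * theta t i (j-1) K)"
        using nb[OF kK(2) ev IHK] unfolding \<sigma>_def by blast+
      have ur: "Uv (int K) \<sigma> * Uv (int K - 2) (\<sigma>-1) = Uv (int K - 1) \<sigma> * Uv (int K - 1) (\<sigma>-1)
          * (if odd (int K) then sx t (\<sigma> - (int K+1) div 2) else 1) * (if odd (int K - 1) then sy t (\<sigma> - int K div 2) else 1)"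
        using U_rec[of "int K" \<sigma>] kK by simp
      have ts: "theta t (i+1) j K * theta t (i-1) j K + theta t i (j+1) K * theta t i (j-1) K
          = (if odd (int K) then sx t (\<sigma> - (int K+1) div 2) else 1) * (if odd (int K - 1) then sy t (\<sigma> - int K div 2) else 1)
            * (theta t i j (K+1) * theta t i j (K-1))"
        using theta_sum[OF kK(2) ev] unfolding \<sigma>_def by simp
      have fK1: "Fv i j (K-1) = Uv (int K - 2) (\<sigma>-1) * theta t i j (K-1)"
      proof -
        have "int (K-1) - 1 = int K - 2" "(i - j + int (K - 1) - 1) div 2 = \<sigma> - 1"
          using kK ev unfolding \<sigma>_def by (simp, presburger)
        then show ?thesis unfolding Fv_def by simp
      qed
      have fK: "Fv i j (K+1) = Uv (int K) \<sigma> * theta t i j (K+1)"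
      proof -
        have "int (K+1) - 1 = int K" "(i - j + int (K+1) - 1) div 2 = \<sigma>"
          using kK ev unfolding \<sigma>_def by simp_all
        then show ?thesis unfolding Fv_def by simp
      qed
      have rec: "Tsys t i j (K+1) * Tsys t i j (K-1) = Tsys t (i+1) j K * Tsys t (i-1) j K + Tsys t i (j+1) K * Tsys t i (j-1) K"
        by (rule Tsys_rec[OF kK(2)])
      have pz: "Uv (int K - 2) (\<sigma>-1) > 0" "theta t i j (K-1) > 0" by (rule U_pos, rule theta_pos)
      define X where "X = (if odd (int K) then sx t (\<sigma> - (int K+1) div 2) else 1)"
      define Y where "Y = (if odd (int K - 1) then sy t (\<sigma> - int K div 2) else 1)"
      have "Tsys t i j (K+1) * Fv i j (K-1) = Uv (int K - 1) \<sigma> * Uv (int K - 1) (\<sigma>-1) *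
            (theta t (i+1) j K * theta t (i-1) j K + theta t i (j+1) K * theta t i (j-1) K)"
        using rec unfolding IHK1 n1 n2 by (simp add: algebra_simps)
      also have "\<dots> = (Uv (int K - 1) \<sigma> * Uv (int K - 1) (\<sigma>-1) * X * Y) * (theta t i j (K+1) * theta t i j (K-1))"
        unfolding ts X_def Y_def by (simp add: algebra_simps)
      also have "\<dots> = (Uv (int K) \<sigma> * Uv (int K - 2) (\<sigma>-1)) * (theta t i j (K+1) * theta t i j (K-1))"
        unfolding ur X_def Y_def by simp
      also have "\<dots> = Fv i j (K+1) * Fv i j (K-1)" unfolding fK fK1 by (simp add: algebra_simps)
      finally have "Tsys t i j (K+1) * Fv i j (K-1) = Fv i j (K+1) * Fv i j (K-1)" .
      then have "Tsys t i j (K+1) = Fv i j (K+1)" using pz fK1 by simp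
      then show ?thesis using kK by simp
    qed
  qed
qed


lemma LR:
  assumes k1: "k \<ge> 1" and ev: "even (i + j + int k)"
  shows "Tsys t (i+1) j k * Tsys t (i-1) j k / (Tsys t i j (k+1) * Tsys t i j (k-1))
      = theta t (i+1) j k * theta t (i-1) j k / (theta t (i+1) j k * theta t (i-1) j k + theta t i (j+1) k * theta t i (j-1) k)"
    and "Tsys t i (j+1) k * Tsys t i (j-1) k / (Tsys t i j (k+1) * Tsys t i j (k-1))
      = theta t i (j+1) k * theta t i (j-1) k / (theta t (i+1) j k * theta t (i-1) j k + theta t i (j+1) k * theta t i (j-1) k)"
proof -
  define Q where "Q = Uv (int k - 1) ((i - j + int k) div 2) * Uv (int k - 1) ((i - j + int k) div 2 - 1)"
  have n1: "Tsys t (i+1) j k * Tsys t (i-1) j k = Q * (theta t (i+1) j k * theta t (i-1) j k)"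
    and n2: "Tsys t i (j+1) k * Tsys t i (j-1) k = Q * (theta t i (j+1) k * theta t i (j-1) k)"
    using nb[OF k1 ev formula] unfolding Q_def by blast+
  have Qp: "Q > 0" unfolding Q_def using U_pos by (simp add: mult_pos_pos)
  have rec: "Tsys t i j (k+1) * Tsys t i j (k-1) = Tsys t (i+1) j k * Tsys t (i-1) j k + Tsys t i (j+1) k * Tsys t i (j-1) k"
    by (rule Tsys_rec[OF k1])
  show "Tsys t (i+1) j k * Tsys t (i-1) j k / (Tsys t i j (k+1) * Tsys t i j (k-1))
      = theta t (i+1) j k * theta t (i-1) j k / (theta t (i+1) j k * theta t (i-1) j k + theta t i (j+1) k * theta t i (j-1) k)"
    unfolding rec n1 n2 distrib_left[symmetric] using Qp by simp
  show "Tsys t i (j+1) k * Tsys t i (j-1) k / (Tsys t i j (k+1) * Tsys t i j (k-1))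
      = theta t i (j+1) k * theta t i (j-1) k / (theta t (i+1) j k * theta t (i-1) j k + theta t i (j+1) k * theta t i (j-1) k)"
    unfolding rec n1 n2 distrib_left[symmetric] using Qp by simp
qed

end

theorem mainTheorem6:
  fixes t :: "int \<Rightarrow> int \<Rightarrow> real" and m :: nat
  assumes "m \<ge> 1"
    and pos: "\<And>i j. t i j > 0"
    and per1: "\<And>i j. t (i + int m) (j - int m) = t i j"
    and per2: "\<And>i j. t (i + 2) (j + 2) = t i j"
  shows "(\<forall>i j k. odd (i + j + int k) \<longrightarrow>
            Tsys t i j k = su t (int k - 1) ((i - j + int k - 1) div 2)
                         * sv t (int k - 2) ((i - j + int k - 1) div 2)
                         * theta t i j k)
       \<and> (\<forall>i j k. k \<ge> 1 \<longrightarrow> even (i + j + int k) \<longrightarrow>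
            (let L = Tsys t (i+1) j k * Tsys t (i-1) j k / (Tsys t i j (k+1) * Tsys t i j (k-1));
                 R = Tsys t i (j+1) k * Tsys t i (j-1) k / (Tsys t i j (k+1) * Tsys t i j (k-1));
                 \<alpha> = (i - j) div 2; \<beta> = (i - j - 1) div 2;
                 A = sa t \<alpha> * sb t (\<alpha>-1) + sa t (\<alpha>-1) * sb t \<alpha>;
                 C = sc t \<beta> * sd t (\<beta>+1) + sc t (\<beta>+1) * sd t \<beta>
             in (even k \<and> (i + j + int k) mod 4 = 0 \<longrightarrow> L = sa t \<alpha> * sb t (\<alpha>-1) / A)
              \<and> (even k \<and> (i + j + int k) mod 4 = 2 \<longrightarrow> L = sa t (\<alpha>-1) * sb t \<alpha> / A)
              \<and> (odd k \<and> (i + j + int k) mod 4 = 0 \<longrightarrow> L = sc t (\<beta>+1) * sd t \<beta> / C)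
              \<and> (odd k \<and> (i + j + int k) mod 4 = 2 \<longrightarrow> L = sc t \<beta> * sd t (\<beta>+1) / C)
              \<and> R = 1 - L))"
proof (intro conjI allI impI)
  fix i j :: int and k :: nat
  assume "odd (i + j + int k)"
  then have "Tsys t i j k = Fv t i j k" by (rule formula[where t=t, OF pos per2])
  then show "Tsys t i j k = su t (int k - 1) ((i - j + int k - 1) div 2)
                         * sv t (int k - 2) ((i - j + int k - 1) div 2) * theta t i j k"
    by (simp add: Fv_def[where t=t, OF pos per2] Uv_def[where t=t, OF pos per2])
next
  fix i j :: int and k :: nat
  assume k1: "k \<ge> 1" and ev: "even (i + j + int k)"
  note L = LR[where t=t, OF pos per2 k1 ev]
  define p1 where "p1 = theta t (i+1) j k * theta t (i-1) j k"
  define p2 where "p2 = theta t i (j+1) k * theta t i (j-1) k"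
  have p1p: "p1 > 0" and p2p: "p2 > 0" unfolding p1_def p2_def using theta_pos[where t=t, OF pos per2] by (simp_all add: mult_pos_pos)
  have c1: "even k \<and> (i + j + int k) mod 4 = 0 \<longrightarrow> p1 / (p1 + p2) = sa t ((i-j) div 2) * sb t ((i-j) div 2 - 1) / (sa t ((i-j) div 2) * sb t ((i-j) div 2 - 1) + sa t ((i-j) div 2 - 1) * sb t ((i-j) div 2))"
    unfolding p1_def p2_def using th_e0[where t=t, OF per2 k1] by simp
  have c2: "even k \<and> (i + j + int k) mod 4 = 2 \<longrightarrow> p1 / (p1 + p2) = sa t ((i-j) div 2 - 1) * sb t ((i-j) div 2) / (sa t ((i-j) div 2) * sb t ((i-j) div 2 - 1) + sa t ((i-j) div 2 - 1) * sb t ((i-j) div 2))"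
    proof (intro impI, elim conjE)
    assume h1: "even k" and h2: "(i + j + int k) mod 4 = 2"
    show "p1 / (p1 + p2) = sa t ((i-j) div 2 - 1) * sb t ((i-j) div 2) / (sa t ((i-j) div 2) * sb t ((i-j) div 2 - 1) + sa t ((i-j) div 2 - 1) * sb t ((i-j) div 2))" unfolding p1_def p2_def th_e2[where t=t, OF per2 k1 h1 h2] by (simp add: add.commute)
  qed
  have c3: "odd k \<and> (i + j + int k) mod 4 = 0 \<longrightarrow> p1 / (p1 + p2) = sc t ((i-j-1) div 2 + 1) * sd t ((i-j-1) div 2) / (sc t ((i-j-1) div 2) * sd t ((i-j-1) div 2 + 1) + sc t ((i-j-1) div 2 + 1) * sd t ((i-j-1) div 2))"
    proof (intro impI, elim conjE)
    assume h1: "odd k" and h2: "(i + j + int k) mod 4 = 0"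
    show "p1 / (p1 + p2) = sc t ((i-j-1) div 2 + 1) * sd t ((i-j-1) div 2) / (sc t ((i-j-1) div 2) * sd t ((i-j-1) div 2 + 1) + sc t ((i-j-1) div 2 + 1) * sd t ((i-j-1) div 2))" unfolding p1_def p2_def th_o0[where t=t, OF per2 k1 h1 h2] by (simp add: add.commute)
  qed
  have c4: "odd k \<and> (i + j + int k) mod 4 = 2 \<longrightarrow> p1 / (p1 + p2) = sc t ((i-j-1) div 2) * sd t ((i-j-1) div 2 + 1) / (sc t ((i-j-1) div 2) * sd t ((i-j-1) div 2 + 1) + sc t ((i-j-1) div 2 + 1) * sd t ((i-j-1) div 2))"
    unfolding p1_def p2_def using th_o2[where t=t, OF per2 k1] by simp
  have c5: "p2 / (p1 + p2) = 1 - p1 / (p1 + p2)" using p1p p2p by (simp add: field_simps)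
  show "let L = Tsys t (i+1) j k * Tsys t (i-1) j k / (Tsys t i j (k+1) * Tsys t i j (k-1));
                 R = Tsys t i (j+1) k * Tsys t i (j-1) k / (Tsys t i j (k+1) * Tsys t i j (k-1));
                 \<alpha> = (i - j) div 2; \<beta> = (i - j - 1) div 2;
                 A = sa t \<alpha> * sb t (\<alpha>-1) + sa t (\<alpha>-1) * sb t \<alpha>;
                 C = sc t \<beta> * sd t (\<beta>+1) + sc t (\<beta>+1) * sd t \<beta>
             in (even k \<and> (i + j + int k) mod 4 = 0 \<longrightarrow> L = sa t \<alpha> * sb t (\<alpha>-1) / A)
              \<and> (even k \<and> (i + j + int k) mod 4 = 2 \<longrightarrow> L = sa t (\<alpha>-1) * sb t \<alpha> / A)
              \<and> (odd k \<and> (i + j + int k) mod 4 = 0 \<longrightarrow> L = sc t (\<beta>+1) * sd t \<beta> / C)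
              \<and> (odd k \<and> (i + j + int k) mod 4 = 2 \<longrightarrow> L = sc t \<beta> * sd t (\<beta>+1) / C)
              \<and> R = 1 - L"
    unfolding Let_def L p1_def[symmetric] p2_def[symmetric] using c1 c2 c3 c4 c5 by blast
qed

end
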